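(* Let $R$ and $S$ be two non-crossing geometric trees in the plane (vertices in general position) whose convex hulls intersect. Then either the convex hull of one of them lies strictly inside the convex hull of the other, or there exist two adjacent vertices on the convex hull of one of the trees whose visibility is blocked by the other tree (i.e., the segment joining them intersects the other tree).
   Context: A geometric tree is a plane straight-line embedding of a tree in $\mathbb{R}^2$, viewed as a subset of $\mathbb{R}^2$; two trees are non-crossing if they are disjoint as point sets. *)

theory Defs
  imports "HOL-Analysis.Analysis"
begin

type_synonym pt = "real^2"

definition graph_adj :: "pt set set \<Rightarrow> (pt \<times> pt) set" where
  "graph_adj E = {(u, v). {u, v} \<in> E}"

definition is_tree :: "pt set \<Rightarrow> pt set set \<Rightarrow> bool" where
  "is_tree V E \<longleftrightarrow> finite V \<and> V \<noteq> {} \<and>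
     (\<forall>e\<in>E. e \<subseteq> V \<and> card e = 2) \<and>
     (\<forall>u\<in>V. \<forall>v\<in>V. (u, v) \<in> (graph_adj E)\<^sup>*) \<and>
     card E = card V - 1"

definition plane_straight_line :: "pt set \<Rightarrow> pt set set \<Rightarrow> bool" where
  "plane_straight_line V E \<longleftrightarrow>
     (\<forall>e1\<in>E. \<forall>e2\<in>E. e1 \<noteq> e2 \<longrightarrow> convex hull e1 \<inter> convex hull e2 \<subseteq> e1 \<inter> e2) \<and>
     (\<forall>w\<in>V. \<forall>e\<in>E. w \<in> convex hull e \<longrightarrow> w \<in> e)"

definition geometric_tree :: "pt set \<Rightarrow> pt set set \<Rightarrow> bool" where
  "geometric_tree V E \<longleftrightarrow> is_tree V E \<and> plane_straight_line V E"

definition tree_points :: "pt set \<Rightarrow> pt set set \<Rightarrow> pt set" where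
  "tree_points V E = V \<union> \<Union> ((\<lambda>e. convex hull e) ` E)"

definition general_position :: "pt set \<Rightarrow> bool" where
  "general_position P \<longleftrightarrow>
     (\<forall>a\<in>P. \<forall>b\<in>P. \<forall>c\<in>P. a \<noteq> b \<and> a \<noteq> c \<and> b \<noteq> c \<longrightarrow> \<not> collinear {a, b, c})"

definition hull_adjacent :: "pt set \<Rightarrow> pt \<Rightarrow> pt \<Rightarrow> bool" where
  "hull_adjacent P u v \<longleftrightarrow> u \<noteq> v \<and>
     u extreme_point_of (convex hull P) \<and> v extreme_point_of (convex hull P) \<and>
     closed_segment u v face_of (convex hull P)"

end

theory Submission
  imports Defs
begin


lemma gt_basic:
  assumes "geometric_tree V E"
  shows "finite V" "V \<noteq> {}" "finite E" "\<And>e. e \<in> E \<Longrightarrow> e \<subseteq> V \<and> card e = 2"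
    "\<And>u v. u \<in> V \<Longrightarrow> v \<in> V \<Longrightarrow> (u, v) \<in> (graph_adj E)\<^sup>*"
proof -
  show f: "finite V" "V \<noteq> {}" "\<And>e. e \<in> E \<Longrightarrow> e \<subseteq> V \<and> card e = 2"
    "\<And>u v. u \<in> V \<Longrightarrow> v \<in> V \<Longrightarrow> (u, v) \<in> (graph_adj E)\<^sup>*"
    using assms unfolding geometric_tree_def is_tree_def by auto
  have "E \<subseteq> Pow V" using f(3) by auto
  then show "finite E" using f(1) by (meson finite_Pow_iff finite_subset)
qed

lemma tp_sub: "geometric_tree V E \<Longrightarrow> tree_points V E \<subseteq> convex hull V"
  unfolding tree_points_def using gt_basic(4)
  by (auto simp: hull_inc dest!: hull_mono[of _ V convex] )

lemma hull_tp: "geometric_tree V E \<Longrightarrow> convex hull (tree_points V E) = convex hull V"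
proof (rule antisym)
  assume "geometric_tree V E"
  then show "convex hull (tree_points V E) \<subseteq> convex hull V"
    using tp_sub by (simp add: convex_hull_subset)
  show "convex hull V \<subseteq> convex hull (tree_points V E)"
    by (rule hull_mono) (auto simp: tree_points_def)
qed

lemma V_tp: "V \<subseteq> tree_points V E" by (auto simp: tree_points_def)

lemma tp_conn:
  assumes "geometric_tree V E"
  shows "connected (tree_points V E)"
proof -
  note b = gt_basic[OF assms]
  obtain v0 where v0: "v0 \<in> V" using b(2) by auto
  let ?T = "tree_points V E"
  have edge: "connected_component ?T u v" if "(u,v) \<in> graph_adj E" for u v
  proof -
    have e: "{u,v} \<in> E" using that by (simp add: graph_adj_def)
    have "convex hull {u,v} \<subseteq> ?T" using e by (auto simp: tree_points_def)
    then show ?thesis unfolding connected_component_def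
      by (intro exI[of _ "convex hull {u,v}"]) (auto simp: convex_connected hull_inc)
  qed
  have rt: "connected_component ?T u v" if "(u,v) \<in> (graph_adj E)\<^sup>*" "u \<in> V" for u v
    using that
  proof (induction rule: rtrancl_induct)
    case base then show ?case using V_tp by (auto intro: connected_component_refl)
  next
    case (step y z) then show ?case using edge connected_component_trans by blast
  qed
  have "connected_component ?T v0 x" if "x \<in> ?T" for x
  proof -
    from that consider "x \<in> V" | e where "e \<in> E" "x \<in> convex hull e" by (auto simp: tree_points_def)
    then show ?thesis
    proof cases
      case 1 then show ?thesis using rt b(5) v0 by blast
    next
      case 2
      then obtain u w where uw: "e = {u,w}" using b(4)[of e] by (metis card_2_iff)
      have "(u,w) \<in> graph_adj E" using uw 2 by (simp add: graph_adj_def)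
      have "connected_component ?T u x"
        unfolding connected_component_def
        using 2 uw by (intro exI[of _ "convex hull e"]) (auto simp: convex_connected hull_inc tree_points_def)
      moreover have "connected_component ?T v0 u" using rt b(5) v0 b(4)[of e] 2 uw by auto
      ultimately show ?thesis using connected_component_trans by blast
    qed
  qed
  then show ?thesis unfolding connected_iff_connected_component
    using connected_component_sym connected_component_trans by blast
qed



lemma frontier_edge:
  fixes V :: "pt set"
  assumes "finite V" "interior (convex hull V) \<noteq> {}" "x \<in> frontier (convex hull V)"
  obtains u v where "u \<noteq> v" "u extreme_point_of convex hull V" "v extreme_point_of convex hull V"
    "closed_segment u v face_of convex hull V" "x \<in> closed_segment u v"
proof -
  let ?K = "convex hull V"
  have pK: "polytope ?K" using assms(1) by (rule polytope_convex_hull)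
  have "x \<in> rel_frontier ?K" using assms rel_frontier_nonempty_interior by blast
  then obtain F where F: "F facet_of ?K" "x \<in> F"
    using rel_frontier_of_polyhedron[OF polytope_imp_polyhedron[OF pK]] by blast
  have dK: "aff_dim ?K = 2" using aff_dim_nonempty_interior[OF assms(2)] by simp
  have Ff: "F face_of ?K" "F \<noteq> {}" "aff_dim F = 1" using F(1) dK by (auto simp: facet_of_def)
  have pF: "polytope F" using face_of_polytope_polytope[OF pK Ff(1)] .
  have "collinear F" using Ff(3) by (simp add: collinear_aff_dim)
  then obtain a b where ab: "F = closed_segment a b"
    using compact_convex_collinear_segment[OF Ff(2) polytope_imp_compact[OF pF] polytope_imp_convex[OF pF]]
    by blast
  have "a \<noteq> b" using ab Ff(3) by auto
  then show ?thesis using that segment_face_of[of a b ?K] Ff(1) ab F(2) by auto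
qed

lemma line_block:
  fixes S :: "pt set"
  assumes conn: "connected S" and disj: "S \<inter> closed_segment u v = {}"
    and nu: "u \<notin> convex hull S" and nv: "v \<notin> convex hull S"
    and p: "p \<in> closed_segment u v" "p \<in> convex hull S"
  shows False
proof -
  define d where "d = v - u"
  define n :: pt where "n = vector [-(d$2), d$1]"
  define c where "c = n \<bullet> u"
  have inn: "n \<bullet> x = -(d$2)*x$1 + d$1 * x$2" for x
    by (simp add: n_def inner_vec_def sum_2)
  have "u \<noteq> v" using p nu by auto
  then have d0: "d$1 \<noteq> 0 \<or> d$2 \<noteq> 0" by (auto simp: d_def vec_eq_iff forall_2)
  then have dd: "d$1 * d$1 + d$2 * d$2 \<noteq> 0"
    using sum_squares_eq_zero_iff by blast
  have line: "\<exists>t. x = u + t *\<^sub>R d" if "n \<bullet> x = c" for x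
  proof -
    define w where "w = x - u"
    have hw: "-(d$2)*w$1 + d$1 * w$2 = 0" using that by (simp add: c_def w_def inn algebra_simps)
    define t where "t = (w$1 * d$1 + w$2 * d$2) / (d$1 * d$1 + d$2 * d$2)"
    have "w$1 = t * d$1" unfolding t_def using dd hw
      by (simp add: field_simps)
    moreover have "w$2 = t * d$2" unfolding t_def using dd hw
      by (simp add: field_simps)
    ultimately have "w = t *\<^sub>R d" by (auto simp: vec_eq_iff forall_2)
    then show ?thesis by (auto simp: w_def algebra_simps)
  qed
  have segd: "(1 - t) *\<^sub>R u + t *\<^sub>R v = u + t *\<^sub>R d" for t
    by (simp add: d_def algebra_simps)
  obtain t' where t': "p = u + t' *\<^sub>R d" "0 \<le> t'" "t' \<le> 1"
    using p(1) segd by (auto simp: in_segment)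
  have hp: "n \<bullet> p = c" unfolding t' c_def
    by (simp add: inner_add_right inn d_def algebra_simps)
  have noS: "n \<bullet> s \<noteq> c" if s: "s \<in> S" for s
  proof
    assume "n \<bullet> s = c"
    then obtain t where t: "s = u + t *\<^sub>R d" using line by blast
    have sH: "s \<in> convex hull S" using s by (simp add: hull_inc)
    consider "t < 0" | "0 \<le> t" "t \<le> 1" | "1 < t" by linarith
    then show False
    proof cases
      case 1
      define m where "m = t / (t - t')"
      have m01: "0 \<le> m" "m \<le> 1" using 1 t' by (auto simp: m_def field_simps)
      have "(1 - m) * t + m * t' = 0" using 1 t' by (simp add: m_def field_simps)
      then have "(1 - m) *\<^sub>R s + m *\<^sub>R p = u"
        unfolding t t'(1) by (simp add: algebra_simps) (metis scaleR_add_left scaleR_zero_left add.commute)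
      then have "u \<in> closed_segment s p" using m01 by (auto simp: in_segment)
      then show False using nu sH p(2) convex_contains_segment[of "convex hull S"] by auto
    next
      case 2
      then have "s \<in> closed_segment u v" using segd[of t] t by (auto simp: in_segment)
      then show False using disj s by auto
    next
      case 3
      define m where "m = (t - 1) / (t - t')"
      have m01: "0 \<le> m" "m \<le> 1" using 3 t' by (auto simp: m_def field_simps)
      have tt: "t - t' \<noteq> 0" using 3 t' by simp
      have e: "m * (t - t') = t - 1" using tt by (simp add: m_def)
      have "(1 - m) * t + m * t' = t - m * (t - t')" by (simp add: algebra_simps)
      then have "(1 - m) * t + m * t' = 1" using e by simp
      moreover have "(1 - m) *\<^sub>R s + m *\<^sub>R p = u + ((1 - m) * t + m * t') *\<^sub>R d"
        unfolding t t'(1) by (simp add: algebra_simps)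
      ultimately have "(1 - m) *\<^sub>R s + m *\<^sub>R p = v" by (simp add: d_def)
      then have "v \<in> closed_segment s p" using m01 by (auto simp: in_segment)
      then show False using nv sH p(2) convex_contains_segment[of "convex hull S"] by auto
    qed
  qed
  have "S \<subseteq> {x. n \<bullet> x > c} \<union> {x. n \<bullet> x < c}" using noS by force
  then have "{x. n \<bullet> x > c} \<inter> S = {} \<or> {x. n \<bullet> x < c} \<inter> S = {}"
    using connectedD[OF conn open_halfspace_gt[of c n] open_halfspace_lt[of n c]] by fastforce
  then have "S \<subseteq> {x. n \<bullet> x < c} \<or> S \<subseteq> {x. n \<bullet> x > c}" using \<open>S \<subseteq> _\<close> by blast
  then have "convex hull S \<subseteq> {x. n \<bullet> x < c} \<or> convex hull S \<subseteq> {x. n \<bullet> x > c}"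
    using hull_minimal[of S "{x. n \<bullet> x < c}" convex] hull_minimal[of S "{x. n \<bullet> x > c}" convex]
      convex_halfspace_gt[of c n] convex_halfspace_lt[of n c] by blast
  then show False using p(2) hp by auto
qed



lemma degen:
  assumes gt: "geometric_tree V E" and gp: "general_position V"
    and int: "interior (convex hull V) = {}"
  shows "convex hull V \<subseteq> tree_points V E"
proof -
  note b = gt_basic[OF gt]
  have cV: "card V \<le> 2"
  proof (rule ccontr)
    assume "\<not> card V \<le> 2"
    then obtain T where T: "T \<subseteq> V" "card T = 3" using obtain_subset_with_card_n[of 3 V] by auto
    then obtain a b c where abc: "T = {a,b,c}" "a\<noteq>b" "a\<noteq>c" "b\<noteq>c" by (auto simp: card_3_iff)
    have abcV: "a \<in> V" "b \<in> V" "c \<in> V" using T abc by auto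
    have "\<forall>a\<in>V. \<forall>b\<in>V. \<forall>c\<in>V. a \<noteq> b \<and> a \<noteq> c \<and> b \<noteq> c \<longrightarrow> \<not> collinear {a, b, c}"
      using gp by (simp add: general_position_def)
    then have "\<not> collinear {a,b,c}" using abcV abc(2-4) by simp
    then have "aff_dim {a,b,c} \<ge> 2" by (simp add: collinear_aff_dim)
    then have "aff_dim V \<ge> 2" using aff_dim_subset[of T V] T abc by simp
    moreover have "aff_dim V \<le> 2" using aff_dim_le_DIM[of V] by simp
    ultimately have "aff_dim (convex hull V) = int DIM(pt)" by (simp add: aff_dim_convex_hull)
    then have "interior (convex hull V) = rel_interior (convex hull V)"
      by (simp add: interior_rel_interior_gen)
    moreover have "rel_interior (convex hull V) \<noteq> {}"
      using b(2) by (simp add: rel_interior_eq_empty)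
    ultimately show False using int by simp
  qed
  have cE: "card E = card V - 1" using gt by (simp add: geometric_tree_def is_tree_def)
  have "card V \<noteq> 0" using b(1,2) by simp
  then consider "card V = 1" | "card V = 2" using cV by linarith
  then show ?thesis
  proof cases
    case 1
    then obtain a where "V = {a}" by (auto simp: card_1_singleton_iff)
    then show ?thesis using V_tp[of V E] by simp
  next
    case 2
    then have "card E = 1" using cE by simp
    then obtain e where e: "E = {e}" by (auto simp: card_1_singleton_iff)
    have "e \<in> E" using e by simp
    then have eV: "e \<subseteq> V" "card e = 2" using b(4) by blast+
    have "card e = card V" using eV(2) 2 by simp
    then have "e = V" using card_subset_eq[OF b(1) eV(1)] by blast
    have "convex hull e \<subseteq> tree_points V E" unfolding tree_points_def e by simp
    then show ?thesis using \<open>e = V\<close> by simp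
  qed
qed

lemma gp_mono: "general_position (A \<union> B) \<Longrightarrow> general_position A" "general_position (A \<union> B) \<Longrightarrow> general_position B"
  unfolding general_position_def by blast+

lemma half:
  assumes gR: "geometric_tree VR ER" and gS: "geometric_tree VS ES" and gp: "general_position VR"
    and disj: "tree_points VR ER \<inter> tree_points VS ES = {}"
    and n2: "\<not> (convex hull (tree_points VS ES) \<subseteq> interior (convex hull (tree_points VR ER)))"
    and n3: "\<not> (\<exists>u v. hull_adjacent (tree_points VR ER) u v \<and> closed_segment u v \<inter> tree_points VS ES \<noteq> {})"
  shows "tree_points VS ES \<inter> convex hull (tree_points VR ER) = {}"
proof (rule ccontr)
  let ?R = "tree_points VR ER" and ?S = "tree_points VS ES"
  assume ne: "?S \<inter> convex hull ?R \<noteq> {}"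
  have A: "convex hull ?R = convex hull VR" using hull_tp[OF gR] .
  have fR: "finite VR" using gt_basic(1)[OF gR] .
  have intA: "interior (convex hull VR) \<noteq> {}"
  proof
    assume "interior (convex hull VR) = {}"
    then have "convex hull VR \<subseteq> ?R" using degen[OF gR gp] by simp
    then show False using ne disj A by auto
  qed
  have nsub: "\<not> ?S \<subseteq> interior (convex hull VR)"
  proof
    assume "?S \<subseteq> interior (convex hull VR)"
    then have "convex hull ?S \<subseteq> interior (convex hull VR)"
      by (simp add: convex_hull_subset hull_minimal)
    then show False using n2 A by simp
  qed
  have cl: "closed (convex hull VR)" using fR by (simp add: compact_imp_closed finite_imp_compact_convex_hull)
  have "?S \<inter> frontier (convex hull VR) \<noteq> {}"
  proof (cases "?S \<subseteq> convex hull VR")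
    case True
    then show ?thesis using nsub cl by (auto simp: frontier_def closure_closed)
  next
    case False
    then show ?thesis using connected_Int_frontier[OF tp_conn[OF gS]] ne A by auto
  qed
  then obtain x where x: "x \<in> ?S" "x \<in> frontier (convex hull VR)" by auto
  obtain u v where "u \<noteq> v" "u extreme_point_of convex hull VR" "v extreme_point_of convex hull VR"
    "closed_segment u v face_of convex hull VR" "x \<in> closed_segment u v"
    using frontier_edge[OF fR intA x(2)] by blast
  then have "hull_adjacent ?R u v" "closed_segment u v \<inter> ?S \<noteq> {}"
    using A x(1) by (auto simp: hull_adjacent_def)
  then show False using n3 by blast
qed

theorem lemma5:
  fixes VR VS :: "pt set" and ER ES :: "pt set set"
  assumes "geometric_tree VR ER" and "geometric_tree VS ES"
    and "general_position (VR \<union> VS)"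
    and "tree_points VR ER \<inter> tree_points VS ES = {}"
    and "convex hull (tree_points VR ER) \<inter> convex hull (tree_points VS ES) \<noteq> {}"
  shows "convex hull (tree_points VR ER) \<subseteq> interior (convex hull (tree_points VS ES))
      \<or> convex hull (tree_points VS ES) \<subseteq> interior (convex hull (tree_points VR ER))
      \<or> (\<exists>u v. hull_adjacent (tree_points VR ER) u v \<and>
               closed_segment u v \<inter> tree_points VS ES \<noteq> {})
      \<or> (\<exists>u v. hull_adjacent (tree_points VS ES) u v \<and>
               closed_segment u v \<inter> tree_points VR ER \<noteq> {})"
proof (rule ccontr)
  let ?R = "tree_points VR ER" and ?S = "tree_points VS ES"
  assume neg: "\<not> ?thesis"
  have n1: "\<not> (convex hull ?R \<subseteq> interior (convex hull ?S))"
    using neg by (simp only: de_Morgan_disj not_False_eq_True)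
  have n2: "\<not> (convex hull ?S \<subseteq> interior (convex hull ?R))"
    using neg by (simp only: de_Morgan_disj not_False_eq_True)
  have n3: "\<not> (\<exists>u v. hull_adjacent ?R u v \<and> closed_segment u v \<inter> ?S \<noteq> {})"
    using neg by (simp only: de_Morgan_disj not_False_eq_True)
  have n4: "\<not> (\<exists>u v. hull_adjacent ?S u v \<and> closed_segment u v \<inter> ?R \<noteq> {})"
    using neg by (simp only: de_Morgan_disj not_False_eq_True)
  have gR: "general_position VR" using gp_mono(1)[OF assms(3)] .
  have gS: "general_position VS" using gp_mono(2)[OF assms(3)] .
  have SA: "?S \<inter> convex hull ?R = {}" using half[OF assms(1,2) gR assms(4) n2 n3] .
  have SR: "?S \<inter> ?R = {}" using assms(4) by (simp add: Int_commute)
  have RB: "?R \<inter> convex hull ?S = {}"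
    using half[OF assms(2,1) gS SR n1 n4] .
  have A: "convex hull ?R = convex hull VR" using hull_tp[OF assms(1)] .
  have fR: "finite VR" using gt_basic(1)[OF assms(1)] .
  obtain p where p: "p \<in> convex hull VR" "p \<in> convex hull ?S" using assms(5) unfolding A by blast
  have intA: "interior (convex hull VR) \<noteq> {}"
  proof
    assume "interior (convex hull VR) = {}"
    then have "convex hull VR \<subseteq> ?R" using degen[OF assms(1) gR] by simp
    then show False using p RB by blast
  qed
  have Sne: "?S \<noteq> {}" using gt_basic(2)[OF assms(2)] V_tp[of VS ES] by auto
  have "convex hull ?S \<inter> frontier (convex hull VR) \<noteq> {}"
  proof (cases "convex hull ?S \<subseteq> convex hull VR")
    case True
    moreover have "?S \<subseteq> convex hull ?S" by (rule hull_subset)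
    ultimately have "?S \<subseteq> convex hull ?R" unfolding A by (rule order_trans[rotated])
    then show ?thesis using SA Sne by blast
  next
    case False
    have "convex hull ?S \<inter> convex hull VR \<noteq> {}" using p by blast
    moreover have "convex hull ?S - convex hull VR \<noteq> {}" using False by blast
    ultimately show ?thesis
      using connected_Int_frontier[OF convex_connected[OF convex_convex_hull[of ?S]]] by blast
  qed
  then obtain x where x: "x \<in> convex hull ?S" "x \<in> frontier (convex hull VR)" by auto
  obtain u v where uv: "u extreme_point_of convex hull VR" "v extreme_point_of convex hull VR"
    "closed_segment u v face_of convex hull VR" "x \<in> closed_segment u v"
    using frontier_edge[OF fR intA x(2)] by blast
  have uvV: "u \<in> VR" "v \<in> VR" using uv(1,2) extreme_point_of_convex_hull by auto
  have "closed_segment u v \<subseteq> convex hull VR" using face_of_imp_subset[OF uv(3)] .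
  then have d: "?S \<inter> closed_segment u v = {}" using SA A by auto
  have "u \<notin> convex hull ?S" "v \<notin> convex hull ?S" using RB uvV V_tp[of VR ER] by auto
  then show False using line_block[OF tp_conn[OF assms(2)] d _ _ uv(4) x(1)] by blast
qed


end
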